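(* Let $A = [0,\mathfrak{c})$, $B = [0,\omega)$, $Y = A \times B$, $p \notin Y$, and $X = Y \cup A \cup \{p\}$, topologized so that: every point of $Y$ is isolated; each $\alpha \in A$ has basic neighborhoods $\{\alpha\} \cup \{\langle \alpha, m\rangle : m > n\}$, $n \in \omega$; and $p$ has basic neighborhoods $\{p\} \cup \{\langle\alpha,n\rangle : \alpha \in A\setminus F,\ n \in \omega\}$ for countable $F \subset A$. Then $X$ is a Hausdorff star Hurewicz space which is not set star Hurewicz.
   Context: $\mathfrak{c}$ denotes the cardinality of the continuum. For a subset $S$ of a space $X$ and a collection $\mathcal{U}$ of subsets of $X$, ${\rm St}(S,\mathcal{U}) = \bigcup\{U \in \mathcal{U}: U \cap S \neq \emptyset\}$. $X$ is star Hurewicz if for each sequence $(\mathcal{U}_n: n\in\mathbb{N})$ of open covers of $X$ there are finite $\mathcal{V}_n \subset \mathcal{U}_n$ such that each $x\in X$ lies in ${\rm St}(\bigcup\mathcal{V}_n,\mathcal{U}_n)$ for all but finitely many $n$. $X$ is set star Hurewicz if for each nonempty $S \subset X$ and each sequence $(\mathcal{U}_n: n\in\mathbb{N})$ of collections of sets open in $X$ with $\overline{S} \subset \bigcup\mathcal{U}_n$ for all $n$, there are finite $\mathcal{V}_n \subset \mathcal{U}_n$ such that each $x \in S$ lies in ${\rm St}(\bigcup\mathcal{V}_n,\mathcal{U}_n)$ for all but finitely many $n$. *)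

theory Defs
  imports "HOL-Analysis.Analysis"
begin

definition St :: "'a set \<Rightarrow> 'a set set \<Rightarrow> 'a set" where
  "St S \<U> = \<Union>{U \<in> \<U>. U \<inter> S \<noteq> {}}"

definition star_Hurewicz :: "'a topology \<Rightarrow> bool" where
  "star_Hurewicz X \<longleftrightarrow>
     (\<forall>\<U> :: nat \<Rightarrow> 'a set set.
        (\<forall>n. (\<forall>U\<in>\<U> n. openin X U) \<and> topspace X \<subseteq> \<Union>(\<U> n)) \<longrightarrow>
        (\<exists>\<V> :: nat \<Rightarrow> 'a set set. (\<forall>n. finite (\<V> n) \<and> \<V> n \<subseteq> \<U> n) \<and>
           (\<forall>x\<in>topspace X. \<forall>\<^sub>F n in sequentially. x \<in> St (\<Union>(\<V> n)) (\<U> n))))"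

definition set_star_Hurewicz :: "'a topology \<Rightarrow> bool" where
  "set_star_Hurewicz X \<longleftrightarrow>
     (\<forall>S \<U>. S \<noteq> {} \<and> S \<subseteq> topspace X \<and>
        (\<forall>n::nat. (\<forall>U\<in>\<U> n. openin X U) \<and> X closure_of S \<subseteq> \<Union>(\<U> n)) \<longrightarrow>
        (\<exists>\<V> :: nat \<Rightarrow> 'a set set. (\<forall>n. finite (\<V> n) \<and> \<V> n \<subseteq> \<U> n) \<and>
           (\<forall>x\<in>S. \<forall>\<^sub>F n in sequentially. x \<in> St (\<Union>(\<V> n)) (\<U> n))))"

text \<open>The index set A = [0,\<mathfrak>c) is represented by the type real (a set of cardinality \<mathfrak>c);
  the topology does not use any order on A.\<close>
datatype pt = Ypt real nat | Apt real | Ppt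

definition nbhdA :: "real \<Rightarrow> nat \<Rightarrow> pt set" where
  "nbhdA \<alpha> n = {Apt \<alpha>} \<union> {Ypt \<alpha> m | m. m > n}"

definition nbhdP :: "real set \<Rightarrow> pt set" where
  "nbhdP F = {Ppt} \<union> {Ypt \<alpha> n | \<alpha> n. \<alpha> \<notin> F}"

definition Xbasis :: "pt set set" where
  "Xbasis = {{Ypt \<alpha> n} | \<alpha> n. True} \<union> {nbhdA \<alpha> n | \<alpha> n. True}
            \<union> {nbhdP F | F. countable F}"

definition Xtop :: "pt topology" where
  "Xtop = topology_generated_by Xbasis"

end

theory Submission
  imports Defs
begin

definition bn :: "pt \<Rightarrow> pt set \<Rightarrow> bool" where
  "bn x V \<longleftrightarrow> (case x of Ypt a n \<Rightarrow> V = {Ypt a n} | Apt a \<Rightarrow> (\<exists>j. V = nbhdA a j)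
      | Ppt \<Rightarrow> (\<exists>F. countable F \<and> V = nbhdP F))"

lemma inB_Y: "{Ypt a n} \<in> Xbasis" unfolding Xbasis_def by (intro UnI1) auto
lemma inB_A: "nbhdA a n \<in> Xbasis" unfolding Xbasis_def by (intro UnI1 UnI2) auto
lemma inB_P: "countable F \<Longrightarrow> nbhdP F \<in> Xbasis" unfolding Xbasis_def by (intro UnI2) auto
lemma topspace_X: "topspace Xtop = UNIV"
proof -
  have "x \<in> \<Union>Xbasis" for x
  proof (cases x)
    case (Ypt a n) then show ?thesis using inB_Y[of a n] by blast
  next
    case (Apt a) then have "x \<in> nbhdA a 0" by (simp add: nbhdA_def)
    then show ?thesis using inB_A[of a 0] by blast
  next
    case Ppt then have "x \<in> nbhdP {}" by (simp add: nbhdP_def)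
    then show ?thesis using inB_P[of "{}"] by blast
  qed
  then show ?thesis unfolding Xtop_def topology_generated_by_topspace by blast
qed

lemma Xbasis_cases: "s \<in> Xbasis \<Longrightarrow> (\<exists>a n. s = {Ypt a n}) \<or> (\<exists>a n. s = nbhdA a n) \<or> (\<exists>F. s = nbhdP F \<and> countable F)"
  unfolding Xbasis_def by blast

lemma open_basic: "B \<in> Xbasis \<Longrightarrow> openin Xtop B"
  unfolding Xtop_def by (rule topology_generated_by_Basis)

lemma open_Y: "openin Xtop {Ypt a n}"
  by (rule open_basic) (rule inB_Y)
lemma open_A: "openin Xtop (nbhdA a n)"
  by (rule open_basic) (rule inB_A)
lemma open_P: "countable F \<Longrightarrow> openin Xtop (nbhdP F)"
  by (rule open_basic) (rule inB_P)

lemma bn_mem: "bn x V \<Longrightarrow> x \<in> V"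
  by (cases x) (auto simp: bn_def nbhdA_def nbhdP_def)

lemma gen_nbhd:
  assumes "generate_topology_on Xbasis U"
  shows "\<forall>x\<in>U. \<exists>V. bn x V \<and> V \<subseteq> U"
  using assms
proof (induction rule: generate_topology_on.induct)
  case Empty then show ?case by simp
next
  case (Int a b)
  show ?case
  proof
    fix x assume x: "x \<in> a \<inter> b"
    then obtain V1 V2 where v: "bn x V1" "V1 \<subseteq> a" "bn x V2" "V2 \<subseteq> b" using Int.IH by blast
    show "\<exists>V. bn x V \<and> V \<subseteq> a \<inter> b"
    proof (cases x)
      case (Ypt c n) then show ?thesis using v by (auto simp: bn_def)
    next
      case (Apt c)
      then obtain i j where "V1 = nbhdA c i" "V2 = nbhdA c j" using v by (auto simp: bn_def)
      moreover have "nbhdA c (max i j) \<subseteq> nbhdA c i \<inter> nbhdA c j" by (auto simp: nbhdA_def)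
      ultimately have "nbhdA c (max i j) \<subseteq> a \<inter> b" using v by blast
      then show ?thesis using Apt by (intro exI[of _ "nbhdA c (max i j)"]) (auto simp: bn_def)
    next
      case Ppt
      then obtain F G where "V1 = nbhdP F" "V2 = nbhdP G" "countable F" "countable G"
        using v by (auto simp: bn_def)
      moreover have "nbhdP (F \<union> G) \<subseteq> nbhdP F \<inter> nbhdP G" by (auto simp: nbhdP_def)
      ultimately show ?thesis using v Ppt unfolding bn_def
        by (intro exI[of _ "nbhdP (F \<union> G)"]) auto
    qed
  qed
next
  case (UN K) then show ?case by blast
next
  case (Basis s)
  show ?case
  proof
    fix x assume x: "x \<in> s"
    from Xbasis_cases[OF Basis] consider (Y) a n where "s = {Ypt a n}" | (A) a n where "s = nbhdA a n"
      | (P) F where "s = nbhdP F" "countable F" by blast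
    then show "\<exists>V. bn x V \<and> V \<subseteq> s"
    proof cases
      case Y then show ?thesis using x by (auto simp: bn_def)
    next
      case A
      show ?thesis
      proof (cases x)
        case (Ypt c m) then show ?thesis using x by (intro exI[of _ "{x}"]) (auto simp: bn_def)
      next
        case (Apt c) then have "c = a" using x A by (simp add: nbhdA_def)
        then show ?thesis using A Apt by (intro exI[of _ s]) (auto simp: bn_def)
      next
        case Ppt then show ?thesis using x A by (simp add: nbhdA_def)
      qed
    next
      case P
      show ?thesis
      proof (cases x)
        case (Ypt c m) then show ?thesis using x by (intro exI[of _ "{x}"]) (auto simp: bn_def)
      next
        case (Apt c) then show ?thesis using x P by (simp add: nbhdP_def)
      next
        case Ppt then show ?thesis using P by (intro exI[of _ s]) (auto simp: bn_def)
      qed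
    qed
  qed
qed

lemma open_nbhd: "openin Xtop U \<Longrightarrow> x \<in> U \<Longrightarrow> \<exists>V. bn x V \<and> V \<subseteq> U"
  using gen_nbhd unfolding Xtop_def openin_topology_generated_by_iff by blast

lemma sepI: "openin Xtop U \<Longrightarrow> openin Xtop V \<Longrightarrow> x \<in> U \<Longrightarrow> y \<in> V \<Longrightarrow> disjnt U V
  \<Longrightarrow> (\<exists>U V. openin Xtop U \<and> openin Xtop V \<and> x \<in> U \<and> y \<in> V \<and> disjnt U V)
     \<and> (\<exists>U V. openin Xtop U \<and> openin Xtop V \<and> y \<in> U \<and> x \<in> V \<and> disjnt U V)"
  by (meson disjnt_sym)

lemma sepYY: "(a,n) \<noteq> (b,m) \<Longrightarrow> disjnt {Ypt a n} {Ypt b m}" by (auto simp: disjnt_def)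
lemma sepYA: "disjnt {Ypt a n} (nbhdA b n)" by (auto simp: disjnt_def nbhdA_def)
lemma sepYP: "disjnt {Ypt a n} (nbhdP {a})" by (auto simp: disjnt_def nbhdP_def)
lemma sepAA: "a \<noteq> b \<Longrightarrow> disjnt (nbhdA a 0) (nbhdA b 0)" by (auto simp: disjnt_def nbhdA_def)
lemma sepAP: "disjnt (nbhdA a 0) (nbhdP {a})" by (auto simp: disjnt_def nbhdA_def nbhdP_def)
lemma memA: "Apt a \<in> nbhdA a n" by (simp add: nbhdA_def)
lemma memP: "Ppt \<in> nbhdP F" by (simp add: nbhdP_def)
lemma openP1: "openin Xtop (nbhdP {a})" by (rule open_P) simp

lemma hausdorff: "Hausdorff_space Xtop"
  unfolding Hausdorff_space_def
proof (intro allI impI)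
  fix x y assume "x \<in> topspace Xtop \<and> y \<in> topspace Xtop \<and> x \<noteq> y"
  then have ne: "x \<noteq> y" by blast
  show "\<exists>U V. openin Xtop U \<and> openin Xtop V \<and> x \<in> U \<and> y \<in> V \<and> disjnt U V"
  proof (cases x)
    case (Ypt a n)
    show ?thesis
    proof (cases y)
      case (Ypt b m) then show ?thesis using \<open>x = Ypt a n\<close> ne
        sepI[OF open_Y open_Y _ _ sepYY[of a n b m]] by auto
    next
      case (Apt b) then show ?thesis using \<open>x = Ypt a n\<close>
        sepI[OF open_Y open_A _ memA sepYA[of a n b]] by auto
    next
      case Ppt then show ?thesis using \<open>x = Ypt a n\<close>
        sepI[OF open_Y openP1 _ memP sepYP[of a n]] by auto
    qed
  next
    case (Apt a)
    show ?thesis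
    proof (cases y)
      case (Ypt b m) then show ?thesis using \<open>x = Apt a\<close>
        sepI[OF open_Y open_A _ memA sepYA[of b m a]] by auto
    next
      case (Apt b) then show ?thesis using \<open>x = Apt a\<close> ne
        sepI[OF open_A open_A memA memA sepAA[of a b]] by auto
    next
      case Ppt then show ?thesis using \<open>x = Apt a\<close>
        sepI[OF open_A openP1 memA memP sepAP[of a]] by auto
    qed
  next
    case Ppt
    show ?thesis
    proof (cases y)
      case (Ypt b m) then show ?thesis using \<open>x = Ppt\<close>
        sepI[OF open_Y openP1 _ memP sepYP[of b m]] by auto
    next
      case (Apt b) then show ?thesis using \<open>x = Ppt\<close>
        sepI[OF open_A openP1 memA memP sepAP[of b]] by auto
    next
      case Ppt then show ?thesis using \<open>x = Ppt\<close> ne by simp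
    qed
  qed
qed


lemma StI: "W \<in> \<U> \<Longrightarrow> x \<in> W \<Longrightarrow> W \<inter> A \<noteq> {} \<Longrightarrow> x \<in> St A \<U>"
  unfolding St_def by blast

lemma star_H: "star_Hurewicz Xtop"
  unfolding star_Hurewicz_def
proof (intro allI impI)
  fix \<U> :: "nat \<Rightarrow> pt set set"
  assume cov: "\<forall>n. (\<forall>U\<in>\<U> n. openin Xtop U) \<and> topspace Xtop \<subseteq> \<Union>(\<U> n)"
  define pick where "pick n x = (SOME W. W \<in> \<U> n \<and> x \<in> W)" for n x
  have pick: "pick n x \<in> \<U> n \<and> x \<in> pick n x" for n x
  proof -
    have "x \<in> \<Union>(\<U> n)" using cov topspace_X by blast
    then have "\<exists>W. W \<in> \<U> n \<and> x \<in> W" by blast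
    then show ?thesis unfolding pick_def by (rule someI_ex)
  qed
  have popen: "openin Xtop (pick n x)" for n x using pick cov by blast
  define Fn where "Fn n = (SOME F. countable F \<and> nbhdP F \<subseteq> pick n Ppt)" for n
  have Fn: "countable (Fn n) \<and> nbhdP (Fn n) \<subseteq> pick n Ppt" for n
  proof -
    obtain V where "bn Ppt V" "V \<subseteq> pick n Ppt" using open_nbhd[OF popen] pick by blast
    then have "\<exists>F. countable F \<and> nbhdP F \<subseteq> pick n Ppt" by (auto simp: bn_def)
    then show ?thesis unfolding Fn_def by (rule someI_ex)
  qed
  define G where "G = insert 0 (\<Union>n. Fn n)"
  have Fc: "countable (Fn n)" for n using Fn[of n] by (rule conjunct1)
  have "countable (\<Union>n. Fn n)" by (rule countable_UN) (auto intro: Fc)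
  then have Gc: "countable G" unfolding G_def by simp
  have Gne: "G \<noteq> {}" unfolding G_def by simp
  define e where "e = from_nat_into G"
  have rangeG: "range e = G" unfolding e_def using range_from_nat_into[OF Gne Gc] .
  define S where "S n = insert Ppt ((\<lambda>k. Apt (e k)) ` {..n} \<union> (\<lambda>(k,m). Ypt (e k) m) ` ({..n}\<times>{..n}))" for n
  define \<V> where "\<V> n = pick n ` S n" for n
  have "finite (S n)" for n unfolding S_def by simp
  then have fin: "finite (\<V> n) \<and> \<V> n \<subseteq> \<U> n" for n unfolding \<V>_def using pick by blast
  have inV: "x \<in> St (\<Union>(\<V> n)) (\<U> n)" if "x \<in> S n" for x n
  proof (rule StI)
    show "pick n x \<in> \<U> n" "x \<in> pick n x" using pick by auto
    have "pick n x \<in> \<V> n" using that unfolding \<V>_def by (rule imageI)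
    then show "pick n x \<inter> \<Union>(\<V> n) \<noteq> {}" using pick[of n x] by blast
  qed
  have PV: "pick n Ppt \<in> \<V> n" for n unfolding \<V>_def S_def by auto
  show "\<exists>\<V>. (\<forall>n. finite (\<V> n) \<and> \<V> n \<subseteq> \<U> n) \<and>
           (\<forall>x\<in>topspace Xtop. \<forall>\<^sub>F n in sequentially. x \<in> St (\<Union>(\<V> n)) (\<U> n))"
  proof (intro exI[of _ \<V>] conjI allI ballI)
    fix n show "finite (\<V> n)" "\<V> n \<subseteq> \<U> n" using fin by auto
  next
    fix x
    show "\<forall>\<^sub>F n in sequentially. x \<in> St (\<Union>(\<V> n)) (\<U> n)"
    proof (cases x)
      case Ppt
      then have "x \<in> S n" for n unfolding S_def by auto
      then show ?thesis using inV by simp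
    next
      case (Apt a)
      show ?thesis
      proof (cases "a \<in> G")
        case True
        then obtain k where k: "a = e k" using rangeG by blast
        have "x \<in> S n" if "n \<ge> k" for n
        proof -
          have "k \<in> {..n}" using that by simp
          then have "(\<lambda>k. Apt (e k)) k \<in> (\<lambda>k. Apt (e k)) ` {..n}" by (rule imageI)
          then show ?thesis unfolding S_def using Apt k by simp
        qed
        then show ?thesis using inV unfolding eventually_sequentially by blast
      next
        case False
        then have nF: "a \<notin> Fn n" for n unfolding G_def by auto
        have "x \<in> St (\<Union>(\<V> n)) (\<U> n)" for n
        proof (rule StI)
          show "pick n x \<in> \<U> n" "x \<in> pick n x" using pick by auto
          obtain V where V: "bn x V" "V \<subseteq> pick n x" using open_nbhd[OF popen] pick by blast
          then obtain j where j: "V = nbhdA a j" using Apt by (auto simp: bn_def)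
          have "Ypt a (Suc j) \<in> pick n x" using V j by (auto simp: nbhdA_def)
          moreover have "Ypt a (Suc j) \<in> nbhdP (Fn n)" using nF[of n] by (auto simp: nbhdP_def)
          then have "Ypt a (Suc j) \<in> pick n Ppt" using Fn[of n] by blast
          ultimately show "pick n x \<inter> \<Union>(\<V> n) \<noteq> {}" using PV by blast
        qed
        then show ?thesis by simp
      qed
    next
      case (Ypt a m)
      show ?thesis
      proof (cases "a \<in> G")
        case True
        then obtain k where k: "a = e k" using rangeG by blast
        have "x \<in> S n" if "n \<ge> max k m" for n
        proof -
          have "(k,m) \<in> {..n}\<times>{..n}" using that by simp
          then have "(\<lambda>(k,m). Ypt (e k) m) (k,m) \<in> (\<lambda>(k,m). Ypt (e k) m) ` ({..n}\<times>{..n})"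
            by (rule imageI)
          then show ?thesis unfolding S_def using Ypt k by simp
        qed
        then show ?thesis using inV unfolding eventually_sequentially by blast
      next
        case False
        then have nF: "a \<notin> Fn n" for n unfolding G_def by auto
        have "x \<in> St (\<Union>(\<V> n)) (\<U> n)" for n
        proof (rule StI)
          show "pick n Ppt \<in> \<U> n" using pick by auto
          have "x \<in> nbhdP (Fn n)" using nF[of n] Ypt by (auto simp: nbhdP_def)
          then show "x \<in> pick n Ppt" using Fn[of n] by blast
          then show "pick n Ppt \<inter> \<Union>(\<V> n) \<noteq> {}" using PV by blast
        qed
        then show ?thesis by simp
      qed
    qed
  qed
qed


lemma nbhdA0_inj: "inj (\<lambda>a. nbhdA a 0)"
proof (rule injI)
  fix a b assume "nbhdA a 0 = nbhdA b 0"
  then have "Apt a \<in> nbhdA b 0" by (metis memA)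
  then show "a = b" by (simp add: nbhdA_def)
qed

lemma not_set_star_H: "\<not> set_star_Hurewicz Xtop"
proof
  assume H: "set_star_Hurewicz Xtop"
  define S where "S = range Apt"
  define \<U> :: "nat \<Rightarrow> pt set set" where "\<U> n = range (\<lambda>a. nbhdA a 0)" for n
  have cl: "Xtop closure_of S \<subseteq> S"
  proof
    fix x assume x: "x \<in> Xtop closure_of S"
    show "x \<in> S"
    proof (cases x)
      case (Ypt a m)
      have "\<exists>y. y \<in> S \<and> y \<in> {x}" using x open_Y Ypt unfolding in_closure_of by blast
      then show ?thesis by blast
    next
      case (Apt a) then show ?thesis by (simp add: S_def)
    next
      case Ppt
      have "\<exists>y. y \<in> S \<and> y \<in> nbhdP {}" using x open_P[of "{}"] memP Ppt unfolding in_closure_of by blast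
      then show ?thesis by (auto simp: S_def nbhdP_def)
    qed
  qed
  have "S \<subseteq> \<Union>(\<U> n)" for n unfolding S_def \<U>_def using memA by blast
  then have hyp: "S \<noteq> {} \<and> S \<subseteq> topspace Xtop \<and>
        (\<forall>n::nat. (\<forall>U\<in>\<U> n. openin Xtop U) \<and> Xtop closure_of S \<subseteq> \<Union>(\<U> n))"
    using cl open_A by (auto simp: S_def \<U>_def topspace_X)
  obtain \<V> where V: "\<forall>n. finite (\<V> n) \<and> \<V> n \<subseteq> \<U> n"
     and ev: "\<forall>x\<in>S. \<forall>\<^sub>F n in sequentially. x \<in> St (\<Union>(\<V> n)) (\<U> n)"
    using H[unfolded set_star_Hurewicz_def, THEN spec, THEN spec, THEN mp, OF hyp] by blast
  define E where "E n = (\<lambda>a. nbhdA a 0) -` \<V> n" for n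
  have Efin: "finite (E n)" for n unfolding E_def using V nbhdA0_inj finite_vimageI by blast
  have inE: "a \<in> E n" if as: "Apt a \<in> St (\<Union>(\<V> n)) (\<U> n)" for a n
  proof -
    obtain W where W: "W \<in> \<U> n" "W \<inter> \<Union>(\<V> n) \<noteq> {}" "Apt a \<in> W"
      using as unfolding St_def by blast
    then obtain b where b: "W = nbhdA b 0" unfolding \<U>_def by blast
    then have "b = a" using W by (simp add: nbhdA_def)
    obtain W' z where W': "W' \<in> \<V> n" "z \<in> W" "z \<in> W'" using W by blast
    then obtain c where c: "W' = nbhdA c 0" using V unfolding \<U>_def by blast
    have "c = a" using W'(2,3) b c \<open>b = a\<close> by (auto simp: nbhdA_def)
    then show ?thesis unfolding E_def using W' c by simp
  qed
  have "countable (\<Union>n. E n)" using Efin by (simp add: countable_finite)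
  then obtain a :: real where a: "a \<notin> (\<Union>n. E n)"
    using uncountable_UNIV_real by (metis UNIV_I countable_subset subsetI)
  have "Apt a \<in> S" by (simp add: S_def)
  then obtain N where "\<forall>n\<ge>N. Apt a \<in> St (\<Union>(\<V> n)) (\<U> n)"
    using ev unfolding eventually_sequentially by blast
  then have "a \<in> E N" using inE by blast
  then show False using a by blast
qed

theorem mainTheorem15:
  shows "Hausdorff_space Xtop \<and> star_Hurewicz Xtop \<and> \<not> set_star_Hurewicz Xtop"
  using hausdorff star_H not_set_star_H by blast

end
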